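(* Let $\beta>0$ and $\gamma>0$ be real numbers. A $2\times 2$ table $P=\begin{pmatrix} p_{00} & p_{01}\\ p_{10} & p_{11}\end{pmatrix}$ (i.e. $p_{ij}>0$ for all $i,j\in\{0,1\}$ and $p_{00}+p_{01}+p_{10}+p_{11}=1$) satisfies \[ \frac{p_{00}p_{10}}{p_{01}p_{11}}=\beta^2 \quad\text{and}\quad \frac{p_{00}p_{01}}{p_{10}p_{11}}=\gamma^2 \] if and only if there exists a real number $v$ with $0<v<\frac{1}{\beta+\gamma}$ such that \[ P=\begin{pmatrix} \frac{\beta}{\beta+\frac{1}{\gamma}}\,[1-(\beta+\gamma)v] & \gamma v\\ \beta v & \frac{1}{\beta\gamma+1}\,[1-(\beta+\gamma)v]\end{pmatrix}. \]
   Context: A $2\times 2$ table is a point of the open probability simplex $\Delta=\{(p_{ij})\in\mathbb{A}^4: \sum p_{ij}=1,\ p_{ij}>0\}$. The odds ratios are $r_{||}=\frac{p_{00}p_{10}}{p_{01}p_{11}}$ and $r_==\frac{p_{00}p_{01}}{p_{10}p_{11}}$, written as $r_{||}=\beta^2$, $r_==\gamma^2$ with $\beta,\gamma>0$. *)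

theory Defs
  imports Complex_Main
begin

definition table2x2 :: "real \<Rightarrow> real \<Rightarrow> real \<Rightarrow> real \<Rightarrow> bool" where
  "table2x2 p00 p01 p10 p11 \<longleftrightarrow>
     p00 > 0 \<and> p01 > 0 \<and> p10 > 0 \<and> p11 > 0 \<and> p00 + p01 + p10 + p11 = 1"

end

theory Submission
  imports Defs
begin

theorem proposition2p3:
  fixes \<beta> \<gamma> p00 p01 p10 p11 :: real
  assumes "\<beta> > 0" and "\<gamma> > 0"
    and "table2x2 p00 p01 p10 p11"
  shows "(p00 * p10 / (p01 * p11) = \<beta>^2 \<and> p00 * p01 / (p10 * p11) = \<gamma>^2) \<longleftrightarrow>
         (\<exists>v::real. 0 < v \<and> v < 1 / (\<beta> + \<gamma>) \<and>
            p00 = \<beta> / (\<beta> + 1 / \<gamma>) * (1 - (\<beta> + \<gamma>) * v) \<and>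
            p01 = \<gamma> * v \<and>
            p10 = \<beta> * v \<and>
            p11 = 1 / (\<beta> * \<gamma> + 1) * (1 - (\<beta> + \<gamma>) * v))"
proof -
  have b: "\<beta> > 0" and g: "\<gamma> > 0" using assms(1,2) .
  have p: "p00 > 0" "p01 > 0" "p10 > 0" "p11 > 0" "p00 + p01 + p10 + p11 = 1"
    using assms(3) unfolding table2x2_def by auto
  have e1: "\<beta> / (\<beta> + 1 / \<gamma>) = \<beta> * \<gamma> / (\<beta> * \<gamma> + 1)"
    using b g by (simp add: field_simps)
  show ?thesis
  proof
    assume h: "p00 * p10 / (p01 * p11) = \<beta>^2 \<and> p00 * p01 / (p10 * p11) = \<gamma>^2"
    have h1: "p00 * p10 = \<beta>^2 * (p01 * p11)" using h p by (simp add: field_simps)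
    have h2: "p00 * p01 = \<gamma>^2 * (p10 * p11)" using h p by (simp add: field_simps)
    have "(p00 * p10) * (p00 * p01) = (\<beta>^2 * (p01 * p11)) * (\<gamma>^2 * (p10 * p11))"
      using h1 h2 by simp
    hence "(p01 * p10) * p00^2 = (p01 * p10) * (\<beta> * \<gamma> * p11)^2"
      by (simp add: power2_eq_square algebra_simps)
    hence "p00^2 = (\<beta> * \<gamma> * p11)^2" using p by simp
    moreover have "\<beta> * \<gamma> * p11 > 0" using p b g by simp
    ultimately have q1: "p00 = \<beta> * \<gamma> * p11"
      using p by (auto simp add: power2_eq_iff)
    have "\<gamma>^2 * (p10 * p11) * p10 = p00 * p01 * p10" using h2 by simp
    also have "\<dots> = \<beta>^2 * (p01 * p11) * p01" using h1 by (simp add: algebra_simps)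
    finally have "p11 * (\<gamma> * p10)^2 = p11 * (\<beta> * p01)^2"
      by (simp add: power2_eq_square algebra_simps)
    hence "(\<gamma> * p10)^2 = (\<beta> * p01)^2" using p by simp
    moreover have "\<gamma> * p10 > 0" "\<beta> * p01 > 0" using p b g by simp_all
    ultimately have q2: "\<gamma> * p10 = \<beta> * p01" by (auto simp add: power2_eq_iff)
    define v where "v = p01 / \<gamma>"
    have v1: "p01 = \<gamma> * v" using g by (simp add: v_def)
    have v2: "p10 = \<beta> * v" using q2 g by (simp add: v_def field_simps)
    have s: "p11 * (\<beta> * \<gamma> + 1) = 1 - (\<beta> + \<gamma>) * v"
      using p(5) q1 v1 v2 by (simp add: algebra_simps)
    have bg: "\<beta> * \<gamma> + 1 > 0" using b g by (simp add: add_pos_pos)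
    have p11e: "p11 = 1 / (\<beta> * \<gamma> + 1) * (1 - (\<beta> + \<gamma>) * v)"
      using s bg by (simp add: field_simps)
    have "1 - (\<beta> + \<gamma>) * v > 0" using s p bg by (metis mult_pos_pos)
    hence vl: "v < 1 / (\<beta> + \<gamma>)" using b g by (simp add: field_simps)
    have "v > 0" using p g v_def by simp
    moreover have "p00 = \<beta> / (\<beta> + 1 / \<gamma>) * (1 - (\<beta> + \<gamma>) * v)"
      unfolding e1 using q1 p11e by simp
    ultimately show "\<exists>v::real. 0 < v \<and> v < 1 / (\<beta> + \<gamma>) \<and>
            p00 = \<beta> / (\<beta> + 1 / \<gamma>) * (1 - (\<beta> + \<gamma>) * v) \<and>
            p01 = \<gamma> * v \<and> p10 = \<beta> * v \<and>
            p11 = 1 / (\<beta> * \<gamma> + 1) * (1 - (\<beta> + \<gamma>) * v)"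
      using vl v1 v2 p11e by blast
  next
    assume "\<exists>v::real. 0 < v \<and> v < 1 / (\<beta> + \<gamma>) \<and>
            p00 = \<beta> / (\<beta> + 1 / \<gamma>) * (1 - (\<beta> + \<gamma>) * v) \<and>
            p01 = \<gamma> * v \<and> p10 = \<beta> * v \<and>
            p11 = 1 / (\<beta> * \<gamma> + 1) * (1 - (\<beta> + \<gamma>) * v)"
    then obtain v where v: "0 < v" "p00 = \<beta> / (\<beta> + 1 / \<gamma>) * (1 - (\<beta> + \<gamma>) * v)"
      "p01 = \<gamma> * v" "p10 = \<beta> * v" "p11 = 1 / (\<beta> * \<gamma> + 1) * (1 - (\<beta> + \<gamma>) * v)"
      by blast
    have q1: "p00 = \<beta> * \<gamma> * p11" using v(2,5) unfolding e1 by simp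
    show "p00 * p10 / (p01 * p11) = \<beta>^2 \<and> p00 * p01 / (p10 * p11) = \<gamma>^2"
      using q1 v(1,3,4) p b g by (simp add: field_simps power2_eq_square)
  qed
qed

end
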